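(* Let $n\ge3$, $\mathcal H=(\mathbb C^2)^{\otimes n}$, with nearest-neighbor neighborhoods $\mathcal N_k=\{k,k+1\}$, $k=1,\dots,n-1$. Let $D=|00\rangle\langle10|+|11\rangle\langle01|$ on $\mathbb C^2\otimes\mathbb C^2$ and $D_k=D$ acting on qubits $k,k+1$ tensored with the identity on the others. Let $\mathcal H'$ be the $+1$-eigenspace of $\sigma_x^{\otimes n}$ (of dimension $2^{n-1}$). Then for every density operator $\rho_0$ supported in $\mathcal H'$, $e^{\mathcal L(0,\{D_k\})t}(\rho_0)\to|\Psi_{\mathrm{GHZ}}\rangle\langle\Psi_{\mathrm{GHZ}}|$ as $t\to\infty$, where $|\Psi_{\mathrm{GHZ}}\rangle=(|0\rangle^{\otimes n}+|1\rangle^{\otimes n})/\sqrt2$; i.e. the GHZ state is $\mathcal H'$-DQLS.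
   Context: $\sigma_x$ is the Pauli $x$ matrix; $\{|0\rangle,|1\rangle\}$ is the computational basis. $\mathcal L(0,\{D_k\})(\rho)=\sum_k(D_k\rho D_k^\dagger-\frac12\{D_k^\dagger D_k,\rho\})$. *)

theory Defs
  imports "HOL-Analysis.Analysis" "Jordan_Normal_Form.Schur_Decomposition"
begin

text \<open>n qubits; computational basis states |b_1 ... b_n> are indexed by
  i = sum_k b_k 2^(n-k), i < 2^n.  qbit n k i is the value b_k of qubit k (1 \<le> k \<le> n).\<close>

definition qbit :: "nat \<Rightarrow> nat \<Rightarrow> nat \<Rightarrow> nat" where
  "qbit n k i = (i div 2 ^ (n - k)) mod 2"

text \<open>D = |00><10| + |11><01| on C^2 \<otimes> C^2, two-qubit basis index 2*a+b for |ab>.\<close>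
definition Dloc :: "nat \<Rightarrow> nat \<Rightarrow> complex" where
  "Dloc a b = (if (a = 0 \<and> b = 2) \<or> (a = 3 \<and> b = 1) then 1 else 0)"

definition Dk :: "nat \<Rightarrow> nat \<Rightarrow> complex mat" where
  "Dk n k = mat (2 ^ n) (2 ^ n) (\<lambda>(i, j).
     if (\<forall>q \<in> {1..n} - {k, k + 1}. qbit n q i = qbit n q j)
     then Dloc (2 * qbit n k i + qbit n (k + 1) i) (2 * qbit n k j + qbit n (k + 1) j)
     else 0)"

definition sigmax_n :: "nat \<Rightarrow> complex mat" where
  "sigmax_n n = mat (2 ^ n) (2 ^ n) (\<lambda>(i, j).
     if (\<forall>q \<in> {1..n}. qbit n q i \<noteq> qbit n q j) then 1 else 0)"

definition mtrace :: "complex mat \<Rightarrow> complex" where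
  "mtrace A = (\<Sum>i < dim_row A. A $$ (i, i))"

definition density_op :: "nat \<Rightarrow> complex mat \<Rightarrow> bool" where
  "density_op N \<rho> \<longleftrightarrow> \<rho> \<in> carrier_mat N N \<and> mat_adjoint \<rho> = \<rho> \<and>
     (\<forall>v \<in> carrier_vec N. 0 \<le> Re (conjugate v \<bullet> (\<rho> *\<^sub>v v))) \<and> mtrace \<rho> = 1"

text \<open>Support (= range, for Hermitian \<rho>) contained in the +1 eigenspace of sigma_x^{\<otimes> n}.\<close>
definition supported_in_Hplus :: "nat \<Rightarrow> complex mat \<Rightarrow> bool" where
  "supported_in_Hplus n \<rho> \<longleftrightarrow>
     (\<forall>v \<in> carrier_vec (2 ^ n). sigmax_n n *\<^sub>v (\<rho> *\<^sub>v v) = \<rho> *\<^sub>v v)"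

definition lindblad_term :: "complex mat \<Rightarrow> complex mat \<Rightarrow> complex mat" where
  "lindblad_term D \<rho> = D * \<rho> * mat_adjoint D
     - (1/2 :: complex) \<cdot>\<^sub>m (mat_adjoint D * D * \<rho> + \<rho> * (mat_adjoint D * D))"

definition lindblad :: "nat \<Rightarrow> complex mat \<Rightarrow> complex mat" where
  "lindblad n \<rho> = mat (2 ^ n) (2 ^ n) (\<lambda>(i, j).
     \<Sum>k \<in> {1..n-1}. lindblad_term (Dk n k) \<rho> $$ (i, j))"

definition lindblad_evol :: "nat \<Rightarrow> real \<Rightarrow> complex mat \<Rightarrow> complex mat" where
  "lindblad_evol n t \<rho> = mat (2 ^ n) (2 ^ n) (\<lambda>(i, j).
     \<Sum>m. (complex_of_real (t ^ m / fact m)) * (((lindblad n) ^^ m) \<rho>) $$ (i, j))"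

definition ghz_vec :: "nat \<Rightarrow> complex vec" where
  "ghz_vec n = vec (2 ^ n) (\<lambda>i. if i = 0 \<or> i = 2 ^ n - 1 then complex_of_real (1 / sqrt 2) else 0)"

definition ghz_proj :: "nat \<Rightarrow> complex mat" where
  "ghz_proj n = mat (2 ^ n) (2 ^ n) (\<lambda>(i, j). ghz_vec n $ i * cnj (ghz_vec n $ j))"

end

theory Submission
  imports Defs
begin


definition fl :: "nat \<Rightarrow> nat \<Rightarrow> nat \<Rightarrow> nat" where
  "fl n k i = Bit_Operations.xor i (2 ^ (n - k))"

lemma qbit_bit: "qbit n q i = (if bit i (n - q) then 1 else 0)"
  unfolding qbit_def bit_iff_odd by (simp add: odd_iff_mod_2_eq_one)

lemma qbit_le1: "qbit n q i = 0 \<or> qbit n q i = 1"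
  by (simp add: qbit_bit)

lemma bits_eq:
  assumes "i < 2 ^ n" "j < 2 ^ n" "\<forall>q\<in>{1..n}. qbit n q i = qbit n q j"
  shows "i = j"
proof (rule bit_eqI)
  fix p
  show "bit i p = bit j p"
  proof (cases "p < n")
    case True
    then have "n - (n - p) = p" "n - p \<in> {1..n}" by auto
    with assms(3) show ?thesis by (metis qbit_bit one_neq_zero)
  next
    case False
    have "take_bit n i = i" "take_bit n j = j" using assms(1,2) by (simp_all add: take_bit_nat_eq_self_iff)
    then show ?thesis using False by (metis bit_take_bit_iff)
  qed
qed

lemma fl_less: assumes "i < 2 ^ n" "1 \<le> k" "k \<le> n" shows "fl n k i < 2 ^ n"
proof -
  have "take_bit n (fl n k i) = fl n k i"
  proof (rule bit_eqI)
    fix p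
    have "take_bit n i = i" using assms(1) by (simp add: take_bit_nat_eq_self_iff)
    then have "\<not> bit i p" if "p \<ge> n" for p using that by (metis bit_take_bit_iff not_le)
    then show "bit (take_bit n (fl n k i)) p = bit (fl n k i) p"
      using assms(2,3) by (cases "n \<le> p") (auto simp: fl_def bit_take_bit_iff bit_xor_iff bit_exp_iff)
  qed
  then show ?thesis by (simp add: take_bit_nat_eq_self_iff)
qed

lemma qbit_fl: assumes "q \<in> {1..n}" "k \<in> {1..n}"
  shows "qbit n q (fl n k i) = (if q = k then 1 - qbit n q i else qbit n q i)"
proof -
  have "(n - q = n - k) = (q = k)" using assms by auto
  then show ?thesis by (auto simp: qbit_bit fl_def bit_xor_iff bit_exp_iff)
qed

lemma fl_fl[simp]: "fl n k (fl n k i) = i"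
  by (simp add: fl_def xor.assoc)

lemma Dloc_iff: assumes "x \<le> 1" "y \<le> 1" "u \<le> 1" "v \<le> 1"
  shows "Dloc (2*x+y) (2*u+v) = (if x = y \<and> v = y \<and> u \<noteq> x then 1 else 0)"
  using assms unfolding Dloc_def
  by (cases x; cases y; cases u; cases v) auto

lemma qbit_le: "qbit n q i \<le> 1" using qbit_le1[of n q i] by auto

lemma Dk_entry:
  assumes "i < 2 ^ n" "a < 2 ^ n" "1 \<le> k" "k < n"
  shows "Dk n k $$ (i, a) = (if qbit n k i = qbit n (k+1) i \<and> a = fl n k i then 1 else 0)"
proof -
  have e: "Dk n k $$ (i, a) = (if (\<forall>q \<in> {1..n} - {k, k + 1}. qbit n q i = qbit n q a) then
     (if qbit n k i = qbit n (k+1) i \<and> qbit n (k+1) a = qbit n (k+1) i \<and> qbit n k a \<noteq> qbit n k i then 1 else 0) else 0)"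
    unfolding Dk_def using assms
    by (simp only: index_mat split Dloc_iff[OF qbit_le qbit_le qbit_le qbit_le])
  show ?thesis
  proof (cases "qbit n k i = qbit n (k+1) i \<and> a = fl n k i")
    case True
    then show ?thesis unfolding e using assms qbit_le1[of n k i]
      by (auto simp: qbit_fl)
  next
    case False
    have "\<not> ((\<forall>q \<in> {1..n} - {k, k + 1}. qbit n q i = qbit n q a) \<and>
       qbit n k i = qbit n (k+1) i \<and> qbit n (k+1) a = qbit n (k+1) i \<and> qbit n k a \<noteq> qbit n k i)"
    proof
      assume H: "(\<forall>q \<in> {1..n} - {k, k + 1}. qbit n q i = qbit n q a) \<and>
       qbit n k i = qbit n (k+1) i \<and> qbit n (k+1) a = qbit n (k+1) i \<and> qbit n k a \<noteq> qbit n k i"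
      have "a = fl n k i"
      proof (rule bits_eq[OF assms(2) fl_less[OF assms(1,3)]])
        show "k \<le> n" using assms by simp
        show "\<forall>q\<in>{1..n}. qbit n q a = qbit n q (fl n k i)"
        proof
          fix q assume q: "q \<in> {1..n}"
          have kk: "k \<in> {1..n}" using assms by auto
          show "qbit n q a = qbit n q (fl n k i)"
            unfolding qbit_fl[OF q kk]
          proof (cases "q = k")
            case True
            then show "qbit n q a = (if q = k then 1 - qbit n q i else qbit n q i)"
              using H qbit_le1[of n k i] qbit_le1[of n k a] by auto
          next
            case False
            have "qbit n q a = qbit n q i"
            proof (cases "q = k + 1")
              case True then show ?thesis using H by simp
            next
              case F2: False
              then have "q \<in> {1..n} - {k, k+1}" using q False by blast
              then show ?thesis using H by metis
            qed
            then show "qbit n q a = (if q = k then 1 - qbit n q i else qbit n q i)"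
              using False by simp
          qed
        qed
      qed
      with H False show False by blast
    qed
    then show ?thesis using e False by argo
  qed
qed

abbreviation cnd :: "nat \<Rightarrow> nat \<Rightarrow> nat \<Rightarrow> bool" where
  "cnd n k i \<equiv> qbit n k i = qbit n (k+1) i"

lemma cnd_fl: assumes "1 \<le> k" "k < n" shows "cnd n k (fl n k i) \<longleftrightarrow> \<not> cnd n k i"
proof -
  have a: "k \<in> {1..n}" "k+1 \<in> {1..n}" using assms by auto
  show ?thesis unfolding qbit_fl[OF a(1) a(1)] qbit_fl[OF a(2) a(1)] using qbit_le1[of n k i] qbit_le1[of n "k+1" i]
    by auto
qed

lemma fl_iff: assumes "1 \<le> k" "k < n"
  shows "(cnd n k i \<and> a = fl n k i) \<longleftrightarrow> (\<not> cnd n k a \<and> i = fl n k a)"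
  using cnd_fl[OF assms] by (metis fl_fl)

lemma Dk_carrier: "Dk n k \<in> carrier_mat (2^n) (2^n)" unfolding Dk_def by simp

lemma sum_D_left: assumes "i < 2^n" "1 \<le> k" "k < n"
  shows "(\<Sum>a<2^n. Dk n k $$ (i,a) * f a) = (if cnd n k i then f (fl n k i) else 0)"
proof -
  have "(\<Sum>a<2^n. Dk n k $$ (i,a) * f a) = (\<Sum>a<2^n. if cnd n k i \<and> a = fl n k i then f a else 0)"
    by (rule sum.cong) (use assms in \<open>auto simp: Dk_entry\<close>)
  also have "\<dots> = (if cnd n k i then f (fl n k i) else 0)"
    using fl_less[OF assms(1,2)] assms by (auto simp: sum.delta')
  finally show ?thesis .
qed

lemma sum_D_right: assumes "a < 2^n" "1 \<le> k" "k < n"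
  shows "(\<Sum>i<2^n. Dk n k $$ (i,a) * f i) = (if \<not> cnd n k a then f (fl n k a) else 0)"
proof -
  have "(\<Sum>i<2^n. Dk n k $$ (i,a) * f i) = (\<Sum>i<2^n. if \<not> cnd n k a \<and> i = fl n k a then f i else 0)"
  proof (rule sum.cong)
    fix i :: nat assume "i \<in> {..<2^n}"
    then have "Dk n k $$ (i,a) = (if \<not> cnd n k a \<and> i = fl n k a then 1 else 0)"
      using assms by (simp only: Dk_entry fl_iff[OF assms(2,3)] lessThan_iff)
    then show "Dk n k $$ (i,a) * f i = (if \<not> cnd n k a \<and> i = fl n k a then f i else 0)" by simp
  qed simp
  also have "\<dots> = (if \<not> cnd n k a then f (fl n k a) else 0)"
    using fl_less[OF assms(1,2)] assms by (auto simp: sum.delta')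
  finally show ?thesis .
qed

lemma mult_entry: assumes "A \<in> carrier_mat N N" "B \<in> carrier_mat N N" "i < N" "j < N"
  shows "(A * B) $$ (i,j) = (\<Sum>l<N. A $$ (i,l) * B $$ (l,j))"
  using assms by (simp add: scalar_prod_def atLeast0LessThan)

lemma adj_carrier: "A \<in> carrier_mat N N \<Longrightarrow> mat_adjoint A \<in> carrier_mat N N"
  unfolding mat_adjoint_def by auto

lemma adj_entry: assumes "A \<in> carrier_mat N N" "i < N" "j < N"
  shows "mat_adjoint A $$ (i,j) = cnj (A $$ (j,i))"
  using assms unfolding mat_adjoint_def by (simp add: mat_of_rows_def)

lemma cnj_D: assumes "i < 2^n" "a < 2^n" "1 \<le> k" "k < n"
  shows "cnj (Dk n k $$ (i,a)) = Dk n k $$ (i,a)"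
  using assms by (simp add: Dk_entry)

lemma DDadj_entry: assumes "a < 2^n" "b < 2^n" "1 \<le> k" "k < n"
  shows "(mat_adjoint (Dk n k) * Dk n k) $$ (a,b) = (if \<not> cnd n k a \<and> b = a then 1 else 0)"
proof -
  have "(mat_adjoint (Dk n k) * Dk n k) $$ (a,b) = (\<Sum>l<2^n. mat_adjoint (Dk n k) $$ (a,l) * Dk n k $$ (l,b))"
    by (rule mult_entry[OF adj_carrier[OF Dk_carrier] Dk_carrier assms(1,2)])
  also have "\<dots> = (\<Sum>l<2^n. Dk n k $$ (l,a) * Dk n k $$ (l,b))"
    by (rule sum.cong) (use assms in \<open>auto simp: adj_entry[OF Dk_carrier] cnj_D\<close>)
  also have "\<dots> = (if \<not> cnd n k a then Dk n k $$ (fl n k a, b) else 0)"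
    by (rule sum_D_right[OF assms(1,3,4)])
  also have "\<dots> = (if \<not> cnd n k a \<and> b = a then 1 else 0)"
    using assms fl_less[OF assms(1,3)] cnd_fl[OF assms(3,4), of a] by (auto simp: Dk_entry)
  finally show ?thesis .
qed

lemma comb_entry: assumes "A \<in> carrier_mat N N" "B \<in> carrier_mat N N" "C \<in> carrier_mat N N" "i < N" "j < N"
  shows "(A - c \<cdot>\<^sub>m (B + C)) $$ (i,j) = A $$ (i,j) - c * (B $$ (i,j) + C $$ (i,j))"
proof -
  have "B + C \<in> carrier_mat N N" using assms by auto
  then have "c \<cdot>\<^sub>m (B + C) \<in> carrier_mat N N" by auto
  then show ?thesis using assms \<open>B + C \<in> carrier_mat N N\<close> by (simp add: carrier_matD)
qed

lemma lt_entry: assumes "\<rho> \<in> carrier_mat (2^n) (2^n)" "i < 2^n" "j < 2^n" "1 \<le> k" "k < n"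
  shows "lindblad_term (Dk n k) \<rho> $$ (i,j) =
    (if cnd n k i \<and> cnd n k j then \<rho> $$ (fl n k i, fl n k j) else 0)
    - (1/2) * ((if cnd n k i then 0 else 1) + (if cnd n k j then 0 else 1)) * \<rho> $$ (i,j)"
proof -
  let ?D = "Dk n k" let ?N = "2^n::nat"
  note DC = Dk_carrier[of n k]
  note AC = adj_carrier[OF DC]
  have DR: "?D * \<rho> \<in> carrier_mat ?N ?N" using DC assms(1) by auto
  have DRe: "(?D * \<rho>) $$ (i',b) = (if cnd n k i' then \<rho> $$ (fl n k i', b) else 0)" if "i' < ?N" "b < ?N" for i' b
    using mult_entry[OF DC assms(1) that] sum_D_left[OF that(1) assms(4,5)] by simp
  have t1: "(?D * \<rho> * mat_adjoint ?D) $$ (i,j) = (if cnd n k i \<and> cnd n k j then \<rho> $$ (fl n k i, fl n k j) else 0)"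
  proof -
    have "(?D * \<rho> * mat_adjoint ?D) $$ (i,j) = (\<Sum>b<?N. (?D * \<rho>) $$ (i,b) * mat_adjoint ?D $$ (b,j))"
      by (rule mult_entry[OF DR AC assms(2,3)])
    also have "\<dots> = (\<Sum>b<?N. ?D $$ (j,b) * (?D * \<rho>) $$ (i,b))"
      by (rule sum.cong) (use assms in \<open>auto simp: adj_entry[OF DC] cnj_D\<close>)
    also have "\<dots> = (if cnd n k j then (?D * \<rho>) $$ (i, fl n k j) else 0)"
      by (rule sum_D_left[OF assms(3,4,5)])
    also have "\<dots> = (if cnd n k i \<and> cnd n k j then \<rho> $$ (fl n k i, fl n k j) else 0)"
      using DRe[OF assms(2) fl_less[OF assms(3,4)]] assms by auto
    finally show ?thesis .
  qed
  have DD: "mat_adjoint ?D * ?D \<in> carrier_mat ?N ?N" using AC DC by auto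
  have t2: "(mat_adjoint ?D * ?D * \<rho>) $$ (i,j) = (if cnd n k i then 0 else 1) * \<rho> $$ (i,j)"
  proof -
    have "(mat_adjoint ?D * ?D * \<rho>) $$ (i,j) = (\<Sum>a<?N. (mat_adjoint ?D * ?D) $$ (i,a) * \<rho> $$ (a,j))"
      by (rule mult_entry[OF DD assms(1) assms(2,3)])
    also have "\<dots> = (\<Sum>a<?N. if a = i then (if cnd n k i then 0 else 1) * \<rho> $$ (a,j) else 0)"
      by (rule sum.cong) (use assms in \<open>auto simp: DDadj_entry\<close>)
    finally show ?thesis using assms by (simp add: sum.delta')
  qed
  have t3: "(\<rho> * (mat_adjoint ?D * ?D)) $$ (i,j) = (if cnd n k j then 0 else 1) * \<rho> $$ (i,j)"
  proof -
    have "(\<rho> * (mat_adjoint ?D * ?D)) $$ (i,j) = (\<Sum>a<?N. \<rho> $$ (i,a) * (mat_adjoint ?D * ?D) $$ (a,j))"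
      by (rule mult_entry[OF assms(1) DD assms(2,3)])
    also have "\<dots> = (\<Sum>a<?N. if a = j then (if cnd n k j then 0 else 1) * \<rho> $$ (i,a) else 0)"
      by (rule sum.cong) (use assms in \<open>auto simp: DDadj_entry\<close>)
    finally show ?thesis using assms by (simp add: sum.delta')
  qed
  have c1: "?D * \<rho> * mat_adjoint ?D \<in> carrier_mat ?N ?N" using DR AC by auto
  have c2: "mat_adjoint ?D * ?D * \<rho> \<in> carrier_mat ?N ?N" using DD assms(1) by auto
  have c3: "\<rho> * (mat_adjoint ?D * ?D) \<in> carrier_mat ?N ?N" using DD assms(1) by auto
  have "lindblad_term ?D \<rho> $$ (i,j) = (?D * \<rho> * mat_adjoint ?D) $$ (i,j) - (1/2) *
     ((mat_adjoint ?D * ?D * \<rho>) $$ (i,j) + (\<rho> * (mat_adjoint ?D * ?D)) $$ (i,j))"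
    unfolding lindblad_term_def by (rule comb_entry[OF c1 c2 c3 assms(2,3)])
  then show ?thesis using t1 t2 t3 by (simp add: algebra_simps)
qed

definition lam :: "nat \<Rightarrow> nat \<Rightarrow> nat \<Rightarrow> real" where
  "lam n i j = (\<Sum>k\<in>{1..n-1}. ((if cnd n k i then 0 else 1) + (if cnd n k j then 0 else 1)) / 2)"

definition inp :: "nat \<Rightarrow> complex mat \<Rightarrow> nat \<Rightarrow> nat \<Rightarrow> complex" where
  "inp n \<rho> i j = (\<Sum>k\<in>{1..n-1}. if cnd n k i \<and> cnd n k j then \<rho> $$ (fl n k i, fl n k j) else 0)"

lemma L_carrier: "lindblad n \<rho> \<in> carrier_mat (2^n) (2^n)"
  unfolding lindblad_def by simp

lemma L_entry: assumes "\<rho> \<in> carrier_mat (2^n) (2^n)" "i < 2^n" "j < 2^n"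
  shows "lindblad n \<rho> $$ (i,j) = inp n \<rho> i j - of_real (lam n i j) * \<rho> $$ (i,j)"
proof -
  have "lindblad n \<rho> $$ (i,j) = (\<Sum>k \<in> {1..n-1}. lindblad_term (Dk n k) \<rho> $$ (i, j))"
    unfolding lindblad_def using assms by simp
  also have "\<dots> = (\<Sum>k \<in> {1..n-1}. (if cnd n k i \<and> cnd n k j then \<rho> $$ (fl n k i, fl n k j) else 0)
    - of_real (((if cnd n k i then 0 else 1) + (if cnd n k j then 0 else 1)) / 2) * \<rho> $$ (i,j))"
  proof (rule sum.cong)
    fix k assume k: "k \<in> {1..n-1}"
    then have "1 \<le> k" "k < n" by auto
    from lt_entry[OF assms this] show "lindblad_term (Dk n k) \<rho> $$ (i, j) = (if cnd n k i \<and> cnd n k j then \<rho> $$ (fl n k i, fl n k j) else 0)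
    - of_real (((if cnd n k i then 0 else 1) + (if cnd n k j then 0 else 1)) / 2) * \<rho> $$ (i,j)"
      by simp
  qed simp
  also have "\<dots> = inp n \<rho> i j - of_real (lam n i j) * \<rho> $$ (i,j)"
    unfolding inp_def lam_def by (simp add: sum_subtractf sum_distrib_right of_real_sum)
  finally show ?thesis .
qed

lemma lam_nonneg: "lam n i j \<ge> 0" unfolding lam_def by (rule sum_nonneg) auto

lemma lam_le: "lam n i j \<le> real n"
proof -
  have "lam n i j \<le> (\<Sum>k\<in>{1..n-1}. 1)" unfolding lam_def by (rule sum_mono) auto
  also have "\<dots> \<le> real n" by simp
  finally show ?thesis .
qed

lemma inp_bound: assumes "\<rho> \<in> carrier_mat (2^n) (2^n)" "\<forall>i<2^n. \<forall>j<2^n. norm (\<rho> $$ (i,j)) \<le> X"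
  "i < 2^n" "j < 2^n"
  shows "norm (inp n \<rho> i j) \<le> real n * X"
proof -
  have X: "X \<ge> 0" using assms(2) by (meson norm_ge_zero order.trans zero_less_numeral zero_less_power)
  have "norm (inp n \<rho> i j) \<le> (\<Sum>k\<in>{1..n-1}. norm (if cnd n k i \<and> cnd n k j then \<rho> $$ (fl n k i, fl n k j) else 0))"
    unfolding inp_def by (rule norm_sum)
  also have "\<dots> \<le> (\<Sum>k\<in>{1..n-1}. X)"
  proof (rule sum_mono)
    fix k assume "k \<in> {1..n-1}"
    then have "fl n k i < 2^n" "fl n k j < 2^n" using fl_less assms by auto
    then show "norm (if cnd n k i \<and> cnd n k j then \<rho> $$ (fl n k i, fl n k j) else 0) \<le> X"
      using assms X by auto
  qed
  also have "\<dots> \<le> real n * X" using X by (simp add: mult_right_mono)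
  finally show ?thesis .
qed

lemma L_bound: assumes "\<rho> \<in> carrier_mat (2^n) (2^n)" "\<forall>i<2^n. \<forall>j<2^n. norm (\<rho> $$ (i,j)) \<le> X"
  shows "\<forall>i<2^n. \<forall>j<2^n. norm (lindblad n \<rho> $$ (i,j)) \<le> (2 * real n) * X"
proof (intro allI impI)
  fix i j assume ij: "i < (2::nat)^n" "j < (2::nat)^n"
  have X: "X \<ge> 0" using assms(2) by (meson norm_ge_zero order.trans zero_less_numeral zero_less_power)
  have "norm (lindblad n \<rho> $$ (i,j)) \<le> norm (inp n \<rho> i j) + norm (of_real (lam n i j) * \<rho> $$ (i,j))"
    unfolding L_entry[OF assms(1) ij] by (rule norm_triangle_ineq4)
  also have "\<dots> \<le> real n * X + real n * X"
  proof (rule add_mono)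
    show "norm (inp n \<rho> i j) \<le> real n * X" by (rule inp_bound[OF assms ij])
    have "norm (of_real (lam n i j) * \<rho> $$ (i,j)) = lam n i j * norm (\<rho> $$ (i,j))"
      using lam_nonneg[of n i j] by (simp add: norm_mult)
    also have "\<dots> \<le> real n * X" using assms(2) ij lam_le[of n i j] lam_nonneg[of n i j] X
      by (intro mult_mono) auto
    finally show "norm (of_real (lam n i j) * \<rho> $$ (i,j)) \<le> real n * X" .
  qed
  finally show "norm (lindblad n \<rho> $$ (i,j)) \<le> (2 * real n) * X" by (simp add: algebra_simps)
qed



lemma decay:
  fixes f b :: "real \<Rightarrow> complex"
  assumes l: "l > 0"
    and d: "\<And>t. (f has_vector_derivative (b t - of_real l * f t)) (at t)"
    and b: "(b \<longlongrightarrow> 0) at_top"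
  shows "(f \<longlongrightarrow> 0) at_top"
proof (rule tendstoI)
  fix e :: real assume e: "e > 0"
  define \<epsilon> where "\<epsilon> = e / 3"
  have \<epsilon>: "\<epsilon> > 0" using e by (simp add: \<epsilon>_def)
  have "eventually (\<lambda>t. dist (b t) 0 < l * \<epsilon>) at_top"
    using b l \<epsilon> by (simp add: tendsto_iff)
  then obtain T where T: "\<And>t. t \<ge> T \<Longrightarrow> norm (b t) < l * \<epsilon>"
    by (auto simp: eventually_at_top_linorder)
  define h where "h t = exp (l * t) *\<^sub>R f t" for t
  have hd: "(h has_vector_derivative (exp (l * t) *\<^sub>R b t)) (at t)" for t
  proof -
    have "(h has_vector_derivative (exp (l * t) *\<^sub>R (b t - of_real l * f t) + (exp (l*t) * l) *\<^sub>R f t)) (at t)"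
      unfolding h_def by (rule has_vector_derivative_scaleR[OF _ d]) (auto intro!: derivative_eq_intros)
    moreover have "exp (l * t) *\<^sub>R (b t - of_real l * f t) + (exp (l*t) * l) *\<^sub>R f t = exp (l * t) *\<^sub>R b t"
      by (simp add: scaleR_conv_of_real algebra_simps)
    ultimately show ?thesis by simp
  qed
  define \<phi> where "\<phi> t = \<epsilon> * exp (l * t)" for t
  have pd: "(\<phi> has_vector_derivative (\<epsilon> * (exp (l * t) * l))) (at t)" for t
    unfolding \<phi>_def has_real_derivative_iff_has_vector_derivative[symmetric]
    by (auto intro!: derivative_eq_intros)
  have bound: "norm (f t) \<le> exp (- l * t) * norm (h T) + \<epsilon>" if t: "t > T" for t
  proof -
    have "norm (h t - h T) \<le> \<phi> t - \<phi> T"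
    proof (rule differentiable_bound_general[OF t])
      show "continuous_on {T..t} h"
        by (rule continuous_on_vector_derivative) (use hd has_vector_derivative_at_within in blast)
      show "continuous_on {T..t} \<phi>"
        by (rule continuous_on_vector_derivative) (use pd has_vector_derivative_at_within in blast)
      show "(h has_vector_derivative exp (l * x) *\<^sub>R b x) (at x)" for x by (rule hd)
      show "(\<phi> has_vector_derivative \<epsilon> * (exp (l * x) * l)) (at x)" for x by (rule pd)
      show "norm (exp (l * x) *\<^sub>R b x) \<le> \<epsilon> * (exp (l * x) * l)" if "T < x" "x < t" for x
      proof -
        have "norm (b x) \<le> l * \<epsilon>" using T[of x] that by simp
        then have "exp (l*x) * norm (b x) \<le> exp (l*x) * (l * \<epsilon>)" by (intro mult_left_mono) auto
        then show ?thesis by (simp add: algebra_simps)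
      qed
    qed
    then have "norm (h t) \<le> norm (h T) + \<epsilon> * exp (l * t)"
      using norm_triangle_ineq2[of "h t" "h T"] \<epsilon> unfolding \<phi>_def by (smt (verit) exp_gt_zero mult_pos_pos)
    moreover have "f t = exp (- l * t) *\<^sub>R h t" unfolding h_def
      by (simp add: exp_minus_inverse[symmetric] exp_add[symmetric])
    ultimately have "norm (f t) \<le> exp (- l * t) * (norm (h T) + \<epsilon> * exp (l * t))"
      by (simp add: mult_left_mono)
    also have "\<dots> = exp (- l * t) * norm (h T) + \<epsilon>"
      by (simp add: algebra_simps exp_add[symmetric])
    finally show ?thesis .
  qed
  have "((\<lambda>t. exp (- l * t) * norm (h T)) \<longlongrightarrow> 0 * norm (h T)) at_top"
    by (intro tendsto_intros filterlim_compose[OF exp_at_bot] filterlim_tendsto_neg_mult_at_bot[OF tendsto_const] filterlim_ident) (use l in auto)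
  then have "eventually (\<lambda>t. exp (- l * t) * norm (h T) < \<epsilon>) at_top"
    using \<epsilon> by (simp add: order_tendstoD(2))
  moreover have "eventually (\<lambda>t. t > T) at_top" by (rule eventually_gt_at_top)
  ultimately show "eventually (\<lambda>t. dist (f t) 0 < e) at_top"
  proof eventually_elim
    case (elim t)
    then have "norm (f t) < 2 * \<epsilon>" using bound[of t] by simp
    then show ?case using \<epsilon> by (simp add: \<epsilon>_def)
  qed
qed

lemma ser_summable:
  fixes c :: "nat \<Rightarrow> complex"
  assumes "\<And>m. norm (c m) \<le> X * K ^ m" "K \<ge> 0"
  shows "summable (\<lambda>m. of_real (t^m / fact m) * c m)"
proof (rule summable_comparison_test')
  show "summable (\<lambda>m. X * (inverse (fact m) * (K * \<bar>t\<bar>)^m))"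
    by (intro summable_mult summable_exp)
  fix m
  have "norm (of_real (t^m / fact m) * c m) = \<bar>t\<bar>^m / fact m * norm (c m)"
    by (simp only: norm_mult norm_of_real) (simp add: power_abs)
  also have "\<dots> \<le> \<bar>t\<bar>^m / fact m * (X * K^m)"
    by (intro mult_left_mono assms) auto
  also have "\<dots> = X * (inverse (fact m) * (K * \<bar>t\<bar>)^m)"
    by (simp add: power_mult_distrib field_simps)
  finally show "norm (of_real (t^m / fact m) * c m) \<le> X * (inverse (fact m) * (K * \<bar>t\<bar>)^m)" .
qed

lemma ser_deriv:
  fixes c :: "nat \<Rightarrow> complex"
  assumes b: "\<And>m. norm (c m) \<le> X * K ^ m" and K: "K \<ge> 0"
  shows "((\<lambda>t. \<Sum>m. of_real (t^m / fact m) * c m) has_vector_derivative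
          (\<Sum>m. of_real (t^m / fact m) * c (Suc m))) (at t)"
proof -
  define d where "d m = c m / of_real (fact m)" for m
  have eq1: "(\<lambda>t. \<Sum>m. of_real (t^m / fact m) * c m) = (\<lambda>t. (\<lambda>z. \<Sum>m. d m * z^m) (of_real t))"
    by (rule ext) (simp add: d_def field_simps)
  have sm: "summable (\<lambda>m. d m * y ^ m)" for y :: complex
  proof (rule summable_comparison_test')
    show "summable (\<lambda>m. X * (inverse (fact m) * (K * norm y)^m))"
      by (intro summable_mult summable_exp)
    fix m
    have "norm (d m * y ^ m) = norm y^m / fact m * norm (c m)"
      by (simp add: d_def norm_mult norm_divide norm_power)
    also have "\<dots> \<le> norm y^m / fact m * (X * K^m)"
      by (intro mult_left_mono b) auto
    also have "\<dots> = X * (inverse (fact m) * (K * norm y)^m)"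
      by (simp add: power_mult_distrib field_simps)
    finally show "norm (d m * y ^ m) \<le> X * (inverse (fact m) * (K * norm y)^m)" .
  qed
  have "((\<lambda>t. (\<lambda>z. \<Sum>m. d m * z^m) (of_real t)) has_vector_derivative (\<Sum>m. diffs d m * (of_real t)^m)) (at t)"
    by (rule has_vector_derivative_real_field[OF termdiffs_strong_converges_everywhere[OF sm]])
  moreover have "diffs d m * (of_real t)^m = of_real (t^m / fact m) * c (Suc m)" for m
  proof -
    have f: "(fact (Suc m) :: complex) = of_nat (Suc m) * fact m" by (simp only: fact_Suc)
    have nz: "(of_nat (Suc m) :: complex) \<noteq> 0" by (simp only: of_nat_eq_0_iff)
    have "diffs d m = c (Suc m) / fact m" unfolding diffs_def d_def of_real_fact f
      using nz by simp
    then show ?thesis by simp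
  qed
  ultimately show ?thesis unfolding eq1 by simp
qed



definition nt :: "nat \<Rightarrow> nat \<Rightarrow> nat" where "nt n i = Bit_Operations.xor i (mask n)"

lemma qbit_nt: assumes "q \<in> {1..n}" shows "qbit n q (nt n i) = 1 - qbit n q i"
  using assms by (auto simp: qbit_bit nt_def bit_xor_iff bit_mask_iff)

lemma nt_less: assumes "i < 2 ^ n" shows "nt n i < 2 ^ n"
proof -
  have "take_bit n (nt n i) = nt n i"
  proof (rule bit_eqI)
    fix p
    have "take_bit n i = i" using assms(1) by (simp add: take_bit_nat_eq_self_iff)
    then have "\<not> bit i p" if "p \<ge> n" for p using that by (metis bit_take_bit_iff not_le)
    then show "bit (take_bit n (nt n i)) p = bit (nt n i) p"
      by (cases "n \<le> p") (auto simp: nt_def bit_take_bit_iff bit_xor_iff bit_mask_iff)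
  qed
  then show ?thesis by (simp add: take_bit_nat_eq_self_iff)
qed

lemma nt_nt[simp]: "nt n (nt n i) = i" by (simp add: nt_def xor.assoc)

lemma fl_nt: "fl n k (nt n i) = nt n (fl n k i)"
  by (simp add: fl_def nt_def xor.assoc xor.commute xor.left_commute)

lemma cnd_nt: assumes "1 \<le> k" "k < n" shows "cnd n k (nt n i) \<longleftrightarrow> cnd n k i"
proof -
  have a: "k \<in> {1..n}" "k+1 \<in> {1..n}" using assms by auto
  show ?thesis unfolding qbit_nt[OF a(1)] qbit_nt[OF a(2)] using qbit_le1[of n k i] qbit_le1[of n "k+1" i]
    by auto
qed

lemma cnd_nt': assumes "k \<in> {1..n-1}" shows "cnd n k (nt n i) \<longleftrightarrow> cnd n k i"
  using assms cnd_nt[of k n i] by auto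

lemma lam_nt1: "lam n (nt n i) j = lam n i j"
  unfolding lam_def
proof (rule sum.cong)
  fix k assume k: "k \<in> {1..n-1}"
  show "((if cnd n k (nt n i) then 0 else 1) + (if cnd n k j then 0 else 1)) / 2 =
     ((if cnd n k i then 0 else 1) + (if cnd n k j then 0 else (1::real))) / 2"
    unfolding cnd_nt'[OF k] ..
qed simp
lemma lam_nt2: "lam n i (nt n j) = lam n i j"
  unfolding lam_def
proof (rule sum.cong)
  fix k assume k: "k \<in> {1..n-1}"
  show "((if cnd n k i then 0 else 1) + (if cnd n k (nt n j) then 0 else 1)) / 2 =
     ((if cnd n k i then 0 else 1) + (if cnd n k j then 0 else (1::real))) / 2"
    unfolding cnd_nt'[OF k] ..
qed simp

definition Sym :: "nat \<Rightarrow> complex mat \<Rightarrow> bool" where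
  "Sym n \<rho> \<longleftrightarrow> (\<forall>i<2^n. \<forall>j<2^n. \<rho> $$ (nt n i, j) = \<rho> $$ (i,j) \<and> \<rho> $$ (i, nt n j) = \<rho> $$ (i,j))"

lemma L_sym: assumes c: "\<rho> \<in> carrier_mat (2^n) (2^n)" and s: "Sym n \<rho>"
  shows "Sym n (lindblad n \<rho>)"
  unfolding Sym_def
proof (intro allI impI conjI)
  fix i j assume ij: "i < (2::nat)^n" "j < (2::nat)^n"
  have fli: "fl n k i < 2^n" "fl n k j < 2^n" if "k \<in> {1..n-1}" for k using that fl_less ij by auto
  have "inp n \<rho> (nt n i) j = inp n \<rho> i j" unfolding inp_def
  proof (rule sum.cong)
    fix k assume k: "k \<in> {1..n-1}"
    show "(if cnd n k (nt n i) \<and> cnd n k j then \<rho> $$ (fl n k (nt n i), fl n k j) else 0) =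
      (if cnd n k i \<and> cnd n k j then \<rho> $$ (fl n k i, fl n k j) else 0)"
      unfolding cnd_nt'[OF k] fl_nt using s fli[OF k] by (simp add: Sym_def)
  qed simp
  then show "lindblad n \<rho> $$ (nt n i, j) = lindblad n \<rho> $$ (i, j)"
    unfolding L_entry[OF c nt_less[OF ij(1)] ij(2)] L_entry[OF c ij] lam_nt1 using s ij by (simp add: Sym_def)
  have "inp n \<rho> i (nt n j) = inp n \<rho> i j" unfolding inp_def
  proof (rule sum.cong)
    fix k assume k: "k \<in> {1..n-1}"
    show "(if cnd n k i \<and> cnd n k (nt n j) then \<rho> $$ (fl n k i, fl n k (nt n j)) else 0) =
      (if cnd n k i \<and> cnd n k j then \<rho> $$ (fl n k i, fl n k j) else 0)"
      unfolding cnd_nt'[OF k] fl_nt using s fli[OF k] by (simp add: Sym_def)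
  qed simp
  then show "lindblad n \<rho> $$ (i, nt n j) = lindblad n \<rho> $$ (i, j)"
    unfolding L_entry[OF c ij(1) nt_less[OF ij(2)]] L_entry[OF c ij] lam_nt2 using s ij by (simp add: Sym_def)
qed

lemma L_trace: assumes c: "\<rho> \<in> carrier_mat (2^n) (2^n)"
  shows "(\<Sum>i<2^n. lindblad n \<rho> $$ (i,i)) = 0"
proof -
  have "(\<Sum>i<2^n. lindblad n \<rho> $$ (i,i)) = (\<Sum>i<2^n. inp n \<rho> i i) - (\<Sum>i<2^n. of_real (lam n i i) * \<rho> $$ (i,i))"
    by (simp add: L_entry[OF c] sum_subtractf)
  also have "(\<Sum>i<2^n. inp n \<rho> i i) = (\<Sum>i<2^n. of_real (lam n i i) * \<rho> $$ (i,i))"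
  proof -
    have "(\<Sum>i<2^n. inp n \<rho> i i) = (\<Sum>k\<in>{1..n-1}. \<Sum>i<2^n. if cnd n k i then \<rho> $$ (fl n k i, fl n k i) else 0)"
      unfolding inp_def by (simp only: conj_absorb) (rule sum.swap)
    also have "\<dots> = (\<Sum>k\<in>{1..n-1}. \<Sum>i<2^n. if \<not> cnd n k i then \<rho> $$ (i, i) else 0)"
    proof (rule sum.cong)
      fix k assume k: "k \<in> {1..n-1}"
      then have k1: "1 \<le> k" "k < n" by auto
      show "(\<Sum>i<2^n. if cnd n k i then \<rho> $$ (fl n k i, fl n k i) else 0) = (\<Sum>i<2^n. if \<not> cnd n k i then \<rho> $$ (i, i) else 0)"
        by (rule sum.reindex_bij_witness[of _ "fl n k" "fl n k"])
           (use k1 fl_less cnd_fl[OF k1] in auto)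
    qed simp
    also have "\<dots> = (\<Sum>i<2^n. \<Sum>k\<in>{1..n-1}. if \<not> cnd n k i then \<rho> $$ (i, i) else 0)"
      by (rule sum.swap)
    also have "\<dots> = (\<Sum>i<2^n. of_real (lam n i i) * \<rho> $$ (i,i))"
    proof (rule sum.cong)
      fix i
      have lm: "of_real (lam n i i) = (\<Sum>k\<in>{1..n-1}. if \<not> cnd n k i then 1 else (0::complex))"
        unfolding lam_def of_real_sum by (rule sum.cong) auto
      show "(\<Sum>k\<in>{1..n-1}. if \<not> cnd n k i then \<rho> $$ (i, i) else 0) = of_real (lam n i i) * \<rho> $$ (i,i)"
        unfolding lm sum_distrib_right by (rule sum.cong) auto
    qed simp
    finally show ?thesis .
  qed
  finally show ?thesis by simp
qed



lemma qbit_0[simp]: "qbit n q 0 = 0" by (simp add: qbit_def)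

lemma qbit_mask: "q \<in> {1..n} \<Longrightarrow> qbit n q (mask n) = 1"
  by (auto simp: qbit_bit bit_mask_iff)

lemma mask_less: "mask n < (2::nat) ^ n" by (simp add: mask_eq_exp_minus_1)

lemma wallfree:
  assumes i: "i < 2 ^ n" and w: "\<forall>k\<in>{1..n-1}. cnd n k i"
  shows "i = 0 \<or> i = mask n"
proof -
  have all: "1 \<le> q \<longrightarrow> q \<le> n \<longrightarrow> qbit n q i = qbit n 1 i" for q
  proof (induction q)
    case 0 then show ?case by simp
  next
    case (Suc q)
    show ?case
    proof (cases "q = 0")
      case True then show ?thesis by simp
    next
      case False
      show ?thesis
      proof (intro impI)
        assume "1 \<le> Suc q" "Suc q \<le> n"
        then have "q \<in> {1..n-1}" using False by auto
        then have "qbit n q i = qbit n (q+1) i" using w by blast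
        then show "qbit n (Suc q) i = qbit n 1 i" using Suc False \<open>Suc q \<le> n\<close> by simp
      qed
    qed
  qed
  show ?thesis
  proof (cases "qbit n 1 i = 0")
    case True
    have "i = 0" by (rule bits_eq[OF i]) (use all True in auto)
    then show ?thesis by simp
  next
    case False
    then have o: "qbit n 1 i = 1" using qbit_le1[of n 1 i] by auto
    have "i = mask n" by (rule bits_eq[OF i mask_less]) (use all o qbit_mask in auto)
    then show ?thesis by simp
  qed
qed

lemma cnd_0: "cnd n k 0" by simp
lemma cnd_mask: "k \<in> {1..n-1} \<Longrightarrow> cnd n k (mask n)"
  using qbit_mask[of k n] qbit_mask[of "k+1" n] by auto

definition Phi :: "nat \<Rightarrow> nat \<Rightarrow> nat" where
  "Phi n i = (\<Sum>k\<in>{1..n-1}. if cnd n k i then 0 else k)"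

lemma Phi_le: "Phi n i \<le> (\<Sum>k\<in>{1..n-1}. k)"
  unfolding Phi_def by (rule sum_mono) auto

lemma Phi_fl: assumes k: "k \<in> {1..n-1}" and c: "cnd n k i"
  shows "Phi n i < Phi n (fl n k i)"
proof -
  let ?s = "fl n k i"
  have k1: "1 \<le> k" "k < n" using k by auto
  have kk: "k \<in> {1..n}" using k by auto
  have pt: "(if cnd n k' i then 0 else k') + (if k' = k then k else 0)
      \<le> (if cnd n k' ?s then 0 else k') + (if k' = k - 1 then k - 1 else 0)" if k': "k' \<in> {1..n-1}" for k'
  proof -
    have a: "k' \<in> {1..n}" "k'+1 \<in> {1..n}" using k' by auto
    show ?thesis
    proof (cases "k' = k")
      case True
      then show ?thesis using cnd_fl[OF k1, of i] c by auto
    next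
      case False
      show ?thesis
      proof (cases "k' = k - 1")
        case True then show ?thesis using False by auto
      next
        case F2: False
        have "k' + 1 \<noteq> k" using F2 by auto
        then have "cnd n k' ?s = cnd n k' i"
          unfolding qbit_fl[OF a(1) kk] qbit_fl[OF a(2) kk] using False by simp
        then show ?thesis using False F2 by simp
      qed
    qed
  qed
  have "Phi n i + k = (\<Sum>k'\<in>{1..n-1}. (if cnd n k' i then 0 else k') + (if k' = k then k else 0))"
    unfolding Phi_def sum.distrib using k by simp
  also have "\<dots> \<le> (\<Sum>k'\<in>{1..n-1}. (if cnd n k' ?s then 0 else k') + (if k' = k - 1 then k - 1 else 0))"
    by (rule sum_mono) (rule pt)
  also have "\<dots> \<le> Phi n ?s + (k - 1)"
    unfolding Phi_def sum.distrib by (simp add: sum.delta)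
  finally show ?thesis using k1 by simp
qed

lemma sigma_entry: assumes "i < 2^n" "a < 2^n"
  shows "sigmax_n n $$ (i,a) = (if a = nt n i then 1 else 0)"
proof -
  have "(\<forall>q \<in> {1..n}. qbit n q i \<noteq> qbit n q a) \<longleftrightarrow> a = nt n i"
  proof
    assume H: "\<forall>q \<in> {1..n}. qbit n q i \<noteq> qbit n q a"
    show "a = nt n i"
    proof (rule bits_eq[OF assms(2) nt_less[OF assms(1)]], intro ballI)
      fix q assume q: "q \<in> {1..n}"
      show "qbit n q a = qbit n q (nt n i)" unfolding qbit_nt[OF q]
        using H q qbit_le1[of n q i] qbit_le1[of n q a] by force
    qed
  next
    assume "a = nt n i"
    then show "\<forall>q \<in> {1..n}. qbit n q i \<noteq> qbit n q a"
      using qbit_nt qbit_le1 by (metis diff_zero le_numeral_extra(1) cancel_comm_monoid_add_class.diff_cancel zero_neq_one)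
  qed
  then show ?thesis unfolding sigmax_n_def using assms by simp
qed



locale evo =
  fixes n :: nat and \<rho>0 :: "complex mat"
  assumes car: "\<rho>0 \<in> carrier_mat (2^n) (2^n)"
begin

abbreviation am :: "nat \<Rightarrow> complex mat" where "am m \<equiv> (lindblad n ^^ m) \<rho>0"

lemma am_car: "am m \<in> carrier_mat (2^n) (2^n)"
  by (cases m) (auto simp: car L_carrier)

lemma am_Suc: "am (Suc m) = lindblad n (am m)" by simp

definition X0 :: real where "X0 = (\<Sum>i<2^n. \<Sum>j<2^n. norm (\<rho>0 $$ (i,j)))"

lemma X0_bound: assumes "i < 2^n" "j < 2^n" shows "norm (\<rho>0 $$ (i,j)) \<le> X0"
proof -
  have "norm (\<rho>0 $$ (i,j)) \<le> (\<Sum>j<2^n. norm (\<rho>0 $$ (i,j)))"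
    by (rule member_le_sum) (use assms in auto)
  also have "\<dots> \<le> X0" unfolding X0_def
    by (rule member_le_sum[where f = "\<lambda>i. \<Sum>j<2^n. norm (\<rho>0 $$ (i,j))"]) (use assms in \<open>auto intro: sum_nonneg\<close>)
  finally show ?thesis .
qed

lemma am_bound: "\<forall>i<2^n. \<forall>j<2^n. norm (am m $$ (i,j)) \<le> X0 * (2 * real n) ^ m"
proof (induction m)
  case 0 then show ?case using X0_bound by simp
next
  case (Suc m)
  from L_bound[OF am_car Suc] show ?case by (simp add: algebra_simps)
qed

definition F :: "nat \<Rightarrow> nat \<Rightarrow> real \<Rightarrow> complex" where
  "F i j t = (\<Sum>m. of_real (t^m / fact m) * am m $$ (i,j))"

lemma F_summ: assumes "i < 2^n" "j < 2^n"
  shows "summable (\<lambda>m. of_real (t^m / fact m) * am m $$ (i,j))"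
  by (rule ser_summable[where X = X0 and K = "2 * real n"]) (use am_bound assms in auto)

definition G :: "nat \<Rightarrow> nat \<Rightarrow> real \<Rightarrow> complex" where
  "G i j t = (\<Sum>k\<in>{1..n-1}. if cnd n k i \<and> cnd n k j then F (fl n k i) (fl n k j) t else 0)"

lemma F_deriv: assumes ij: "i < 2^n" "j < 2^n"
  shows "(F i j has_vector_derivative (G i j t - of_real (lam n i j) * F i j t)) (at t)"
proof -
  let ?w = "\<lambda>m. (of_real (t^m / fact m) :: complex)"
  have d: "(F i j has_vector_derivative (\<Sum>m. ?w m * am (Suc m) $$ (i,j))) (at t)"
    unfolding F_def[abs_def]
    by (rule ser_deriv[where X = X0 and K = "2 * real n"]) (use am_bound ij in auto)
  have fl: "fl n k i < 2^n" "fl n k j < 2^n" if "k \<in> {1..n-1}" for k using that fl_less ij by auto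
  have pt: "?w m * am (Suc m) $$ (i,j) =
     (\<Sum>k\<in>{1..n-1}. if cnd n k i \<and> cnd n k j then ?w m * am m $$ (fl n k i, fl n k j) else 0)
     - of_real (lam n i j) * (?w m * am m $$ (i,j))" for m
    unfolding am_Suc L_entry[OF am_car ij] inp_def
    by (simp add: right_diff_distrib sum_distrib_left if_distrib algebra_simps cong: if_cong)
  have sk: "summable (\<lambda>m. if cnd n k i \<and> cnd n k j then ?w m * am m $$ (fl n k i, fl n k j) else 0)"
    if "k \<in> {1..n-1}" for k
    using F_summ[OF fl[OF that]] by (cases "cnd n k i \<and> cnd n k j") auto
  have "(\<Sum>m. ?w m * am (Suc m) $$ (i,j)) =
     (\<Sum>m. (\<Sum>k\<in>{1..n-1}. if cnd n k i \<and> cnd n k j then ?w m * am m $$ (fl n k i, fl n k j) else 0))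
     - (\<Sum>m. of_real (lam n i j) * (?w m * am m $$ (i,j)))"
  proof -
    have s1: "summable (\<lambda>m. \<Sum>k\<in>{1..n-1}. if cnd n k i \<and> cnd n k j then ?w m * am m $$ (fl n k i, fl n k j) else 0)"
      by (rule summable_sum) (rule sk)
    have s2: "summable (\<lambda>m. of_real (lam n i j) * (?w m * am m $$ (i,j)))"
      by (rule summable_mult) (rule F_summ[OF ij])
    show ?thesis unfolding pt by (rule suminf_diff[OF s1 s2, symmetric])
  qed
  also have "\<dots> = G i j t - of_real (lam n i j) * F i j t"
  proof -
    have "(\<Sum>m. (\<Sum>k\<in>{1..n-1}. if cnd n k i \<and> cnd n k j then ?w m * am m $$ (fl n k i, fl n k j) else 0))
       = (\<Sum>k\<in>{1..n-1}. \<Sum>m. if cnd n k i \<and> cnd n k j then ?w m * am m $$ (fl n k i, fl n k j) else 0)"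
      by (rule suminf_sum) (rule sk)
    also have "\<dots> = G i j t" unfolding G_def F_def
      by (rule sum.cong) auto
    finally have 1: "(\<Sum>m. (\<Sum>k\<in>{1..n-1}. if cnd n k i \<and> cnd n k j then ?w m * am m $$ (fl n k i, fl n k j) else 0)) = G i j t" .
    have 2: "(\<Sum>m. of_real (lam n i j) * (?w m * am m $$ (i,j))) = of_real (lam n i j) * F i j t"
      unfolding F_def by (rule suminf_mult[OF F_summ[OF ij]])
    show ?thesis using 1 2 by simp
  qed
  finally show ?thesis using d by simp
qed

lemma am_sym: "Sym n \<rho>0 \<Longrightarrow> Sym n (am m)"
  by (induction m) (auto intro: L_sym[OF am_car])

lemma F_sym: assumes s: "Sym n \<rho>0" and ij: "i < 2^n" "j < 2^n"
  shows "F (nt n i) j t = F i j t" "F i (nt n j) t = F i j t"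
  unfolding F_def using am_sym[OF s] ij by (simp_all add: Sym_def)

lemma F_trace: "(\<Sum>i<2^n. F i i t) = mtrace \<rho>0"
proof -
  let ?w = "\<lambda>m. (of_real (t^m / fact m) :: complex)"
  have "(\<Sum>i<2^n. F i i t) = (\<Sum>m. \<Sum>i<2^n. ?w m * am m $$ (i,i))"
    unfolding F_def by (rule suminf_sum[symmetric]) (rule F_summ; simp)
  also have "\<dots> = (\<Sum>m. if m = 0 then mtrace \<rho>0 else 0)"
  proof (rule suminf_cong)
    fix m
    show "(\<Sum>i<2^n. ?w m * am m $$ (i,i)) = (if m = 0 then mtrace \<rho>0 else 0)"
    proof (cases m)
      case 0 then show ?thesis using car by (simp add: mtrace_def)
    next
      case (Suc m')
      have "(\<Sum>i<2^n. ?w m * am m $$ (i,i)) = ?w m * (\<Sum>i<2^n. lindblad n (am m') $$ (i,i))"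
        unfolding Suc am_Suc by (simp add: sum_distrib_left)
      then show ?thesis using L_trace[OF am_car] Suc by simp
    qed
  qed
  also have "\<dots> = mtrace \<rho>0" using sums_single[of 0 "\<lambda>_. mtrace \<rho>0"] by (simp add: sums_iff)
  finally show ?thesis .
qed

lemma walled: "\<forall>i<2^n. \<forall>j<2^n. (\<exists>k\<in>{1..n-1}. \<not> cnd n k i \<or> \<not> cnd n k j) \<longrightarrow> (F i j \<longlongrightarrow> 0) at_top"
proof -
  define B where "B = (\<Sum>k\<in>{1..n-1}. k)"
  have main: "\<forall>i. B - Phi n i = d \<longrightarrow> (\<forall>j. i < 2^n \<longrightarrow> j < 2^n \<longrightarrow>
     (\<exists>k\<in>{1..n-1}. \<not> cnd n k i \<or> \<not> cnd n k j) \<longrightarrow> (F i j \<longlongrightarrow> 0) at_top)" for d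
  proof (induction d rule: less_induct)
    case (less d)
    show ?case
    proof (intro allI impI)
      fix i j assume dd: "B - Phi n i = d" and ij: "i < (2::nat)^n" "j < (2::nat)^n"
        and w: "\<exists>k\<in>{1..n-1}. \<not> cnd n k i \<or> \<not> cnd n k j"
      have Gt: "(G i j \<longlongrightarrow> 0) at_top" unfolding G_def
      proof (rule tendsto_null_sum)
        fix k assume k: "k \<in> {1..n-1}"
        show "((\<lambda>t. if cnd n k i \<and> cnd n k j then F (fl n k i) (fl n k j) t else 0) \<longlongrightarrow> 0) at_top"
        proof (cases "cnd n k i \<and> cnd n k j")
          case True
          have k1: "1 \<le> k" "k < n" using k by auto
          have lt: "Phi n i < Phi n (fl n k i)" by (rule Phi_fl[OF k]) (use True in simp)
          have "Phi n (fl n k i) \<le> B" unfolding B_def by (rule Phi_le)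
          then have dl: "B - Phi n (fl n k i) < d" using lt dd by linarith
          have nc: "\<not> cnd n k (fl n k i)" using cnd_fl[OF k1] True by simp
          have fi: "fl n k i < 2^n" "fl n k j < 2^n" using fl_less ij k1 by auto
          have ex: "\<exists>k'\<in>{1..n-1}. \<not> cnd n k' (fl n k i) \<or> \<not> cnd n k' (fl n k j)"
            using k nc by blast
          have "(F (fl n k i) (fl n k j) \<longlongrightarrow> 0) at_top"
            using less.IH[OF dl, rule_format, OF refl fi ex] .
          then show ?thesis using True by simp
        next
          case False
          then have "(\<lambda>t. if cnd n k i \<and> cnd n k j then F (fl n k i) (fl n k j) t else 0) = (\<lambda>t. 0)"
            by (intro ext) (simp only: if_False)
          then show ?thesis by simp
        qed
      qed
      have lpos: "lam n i j > 0"
      proof -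
        obtain k where k: "k \<in> {1..n-1}" and "\<not> cnd n k i \<or> \<not> cnd n k j" using w by blast
        then have "(0::real) < ((if cnd n k i then 0 else 1) + (if cnd n k j then 0 else 1)) / 2" by auto
        also have "\<dots> \<le> lam n i j" unfolding lam_def
          by (rule member_le_sum[of k _ "\<lambda>k. ((if cnd n k i then 0 else 1) + (if cnd n k j then 0 else (1::real))) / 2"])
             (use k in auto)
        finally show ?thesis .
      qed
      show "(F i j \<longlongrightarrow> 0) at_top"
        by (rule decay[OF lpos F_deriv[OF ij] Gt])
    qed
  qed
  show ?thesis using main by blast
qed

end



theorem mainTheorem14:
  fixes n :: nat and \<rho>0 :: "complex mat"
  assumes "n \<ge> 3"
    and "density_op (2 ^ n) \<rho>0"
    and "supported_in_Hplus n \<rho>0"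
  shows "\<forall>i < 2 ^ n. \<forall>j < 2 ^ n.
           ((\<lambda>t. lindblad_evol n t \<rho>0 $$ (i, j)) \<longlongrightarrow> ghz_proj n $$ (i, j)) at_top"
proof -
  let ?N = "2^n :: nat"
  have car: "\<rho>0 \<in> carrier_mat ?N ?N" and adj: "mat_adjoint \<rho>0 = \<rho>0" and tr: "mtrace \<rho>0 = 1"
    using assms(2) by (auto simp: density_op_def)
  interpret evo n \<rho>0 by unfold_locales (rule car)
  have herm: "\<rho>0 $$ (i,j) = cnj (\<rho>0 $$ (j,i))" if "i < ?N" "j < ?N" for i j
    using adj_entry[OF car that] adj by simp
  have row: "\<rho>0 $$ (nt n i, j) = \<rho>0 $$ (i,j)" if ij: "i < ?N" "j < ?N" for i j
  proof -
    let ?v = "\<rho>0 *\<^sub>v unit_vec ?N j"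
    have ve: "?v $ l = \<rho>0 $$ (l,j)" if "l < ?N" for l
      using car that ij by simp
    have dv: "dim_vec ?v = ?N" using car by simp
    have "(sigmax_n n *\<^sub>v ?v) $ i = ?v $ i"
      using assms(3) unfolding supported_in_Hplus_def using ij by simp
    moreover have "(sigmax_n n *\<^sub>v ?v) $ i = ?v $ nt n i"
    proof -
      have "(sigmax_n n *\<^sub>v ?v) $ i = (\<Sum>l\<in>{0..<?N}. sigmax_n n $$ (i,l) * ?v $ l)"
        using ij dv by (simp add: sigmax_n_def scalar_prod_def)
      also have "\<dots> = (\<Sum>l\<in>{0..<?N}. if l = nt n i then ?v $ l else 0)"
        by (rule sum.cong) (use ij in \<open>auto simp: sigma_entry\<close>)
      also have "\<dots> = ?v $ nt n i" using nt_less[OF ij(1)] by (simp add: sum.delta')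
      finally show ?thesis .
    qed
    ultimately show ?thesis using ve ij nt_less[OF ij(1)] by simp
  qed
  have s: "Sym n \<rho>0" unfolding Sym_def
  proof (intro allI impI conjI)
    fix i j assume ij: "i < ?N" "j < ?N"
    show "\<rho>0 $$ (nt n i, j) = \<rho>0 $$ (i,j)" by (rule row[OF ij])
    have "\<rho>0 $$ (i, nt n j) = cnj (\<rho>0 $$ (nt n j, i))" by (rule herm[OF ij(1) nt_less[OF ij(2)]])
    also have "\<dots> = cnj (\<rho>0 $$ (j, i))" using row[OF ij(2) ij(1)] by simp
    also have "\<dots> = \<rho>0 $$ (i,j)" using herm[OF ij] by simp
    finally show "\<rho>0 $$ (i, nt n j) = \<rho>0 $$ (i,j)" .
  qed
  define M :: nat where "M = mask n"
  have M: "M = ?N - 1" unfolding M_def by (simp add: mask_eq_exp_minus_1)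
  have MN: "M < ?N" unfolding M_def by (rule mask_less)
  have "(2::nat)^1 \<le> 2^n" by (rule power_increasing) (use assms(1) in auto)
  then have M0: "M \<noteq> 0" using M by simp
  have ntM: "nt n 0 = M" unfolding nt_def M_def by simp
  have wall: "\<exists>k\<in>{1..n-1}. \<not> cnd n k i" if "i < ?N" "i \<noteq> 0" "i \<noteq> M" for i
    using wallfree[OF that(1)] that unfolding M_def by blast
  have evF: "lindblad_evol n t \<rho>0 $$ (i, j) = F i j t" if "i < ?N" "j < ?N" for i j t
    using that unfolding lindblad_evol_def F_def by simp
  have ghz: "ghz_proj n $$ (i, j) = (if (i = 0 \<or> i = M) \<and> (j = 0 \<or> j = M) then 1/2 else 0)"
    if "i < ?N" "j < ?N" for i j
  proof -
    have "complex_of_real (1 / sqrt 2) * cnj (complex_of_real (1 / sqrt 2)) = complex_of_real (1/2)"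
      by (simp flip: of_real_mult)
    then show ?thesis using that unfolding ghz_proj_def ghz_vec_def M by auto
  qed
  have F00: "(F 0 0 \<longlongrightarrow> 1/2) at_top"
  proof -
    define R where "R t = (\<Sum>i\<in>{..<?N} - {0, M}. F i i t)" for t
    have Rt: "(R \<longlongrightarrow> 0) at_top" unfolding R_def[abs_def]
    proof (rule tendsto_null_sum)
      fix i assume "i \<in> {..<?N} - {0, M}"
      then have i: "i < ?N" "i \<noteq> 0" "i \<noteq> M" by auto
      then show "(F i i \<longlongrightarrow> 0) at_top" using walled wall[OF i] by blast
    qed
    have eq: "F 0 0 t = (1 - R t) / 2" for t
    proof -
      have "(\<Sum>i<?N. F i i t) = R t + (\<Sum>i\<in>{0, M}. F i i t)"
        unfolding R_def by (rule sum.subset_diff) (use MN in auto)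
      also have "(\<Sum>i\<in>{0, M}. F i i t) = F 0 0 t + F M M t" using M0 by simp
      also have "F M M t = F 0 0 t"
        using F_sym[OF s, of 0 0 t] F_sym[OF s, of 0 "nt n 0" t] ntM MN by simp
      finally have "1 = R t + (F 0 0 t + F 0 0 t)" using F_trace tr by simp
      then have "F 0 0 t * 2 = 1 - R t" by (simp add: algebra_simps)
      then show ?thesis by (metis nonzero_mult_div_cancel_right zero_neq_numeral)
    qed
    have "((\<lambda>t. (1 - R t) / 2) \<longlongrightarrow> (1 - 0) / 2) at_top"
      by (intro tendsto_intros Rt) simp
    then show ?thesis unfolding eq[abs_def] by simp
  qed
  show ?thesis
  proof (intro allI impI)
    fix i j assume ij: "i < ?N" "j < ?N"
    show "((\<lambda>t. lindblad_evol n t \<rho>0 $$ (i, j)) \<longlongrightarrow> ghz_proj n $$ (i, j)) at_top"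
      unfolding evF[OF ij] ghz[OF ij]
    proof (cases "(i = 0 \<or> i = M) \<and> (j = 0 \<or> j = M)")
      case True
      have "F i j t = F 0 0 t" for t
        using True F_sym[OF s, of 0 0 t] F_sym[OF s, of 0 "nt n 0" t] F_sym[OF s, of 0 0 t] ntM MN
        by (elim conjE disjE) (simp_all)
      then show "((\<lambda>t. F i j t) \<longlongrightarrow> (if (i = 0 \<or> i = M) \<and> (j = 0 \<or> j = M) then 1/2 else 0)) at_top"
        using True F00 by simp
    next
      case False
      then have "\<exists>k\<in>{1..n-1}. \<not> cnd n k i \<or> \<not> cnd n k j" using wall ij by blast
      then have "(F i j \<longlongrightarrow> 0) at_top" using walled ij by blast
      then show "((\<lambda>t. F i j t) \<longlongrightarrow> (if (i = 0 \<or> i = M) \<and> (j = 0 \<or> j = M) then 1/2 else 0)) at_top"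
        by (simp only: if_not_P[OF False])
    qed
  qed
qed


end
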